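(* Let $\alpha:=\int_{\Omega}\frac{dx}{p(x)}$ and $e:=\exp(1)$. If $\alpha e<m<l$, then \[ \Vert u\Vert_{mp(x)}\leq\Vert u\Vert_{lp(x)}\quad\forall\,u\in L^{lp(x)}(\Omega). \]
   Context: $\Omega\subset\mathbb{R}^N$ is a bounded domain; $p\in C^{1}(\overline{\Omega})$ with $1<\inf p\le\sup p<\infty$. For a continuous exponent $r$, $\Vert u\Vert_{r(x)}=\inf\{\gamma>0:\int_{\Omega}|u/\gamma|^{r(x)}\frac{dx}{r(x)}\leq1\}$ (Luxemburg norm), and $L^{r(x)}(\Omega)$ is the space of measurable $u$ with $\int_\Omega|u|^{r(x)}dx<\infty$. *)

theory Defs
  imports "HOL-Analysis.Analysis"
begin

definition lux_norm :: "'a::euclidean_space set \<Rightarrow> ('a \<Rightarrow> real) \<Rightarrow> ('a \<Rightarrow> real) \<Rightarrow> real" where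
  "lux_norm \<Omega> r u = Inf {\<gamma>::real. \<gamma> > 0 \<and>
      (\<integral>\<^sup>+ x\<in>\<Omega>. ennreal (\<bar>u x / \<gamma>\<bar> powr r x / r x) \<partial>lebesgue) \<le> 1}"

definition var_Lp :: "'a::euclidean_space set \<Rightarrow> ('a \<Rightarrow> real) \<Rightarrow> ('a \<Rightarrow> real) set" where
  "var_Lp \<Omega> r = {u. set_borel_measurable lebesgue \<Omega> u \<and>
      (\<integral>\<^sup>+ x\<in>\<Omega>. ennreal (\<bar>u x\<bar> powr r x) \<partial>lebesgue) < \<infinity>}"

definition C1_closure :: "'a::euclidean_space set \<Rightarrow> ('a \<Rightarrow> real) \<Rightarrow> bool" where
  "C1_closure \<Omega> p \<longleftrightarrow> continuous_on (closure \<Omega>) p \<and>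
     (\<exists>g. continuous_on (closure \<Omega>) g \<and>
          (\<forall>x\<in>\<Omega>. (p has_derivative (\<lambda>h. g x \<bullet> h)) (at x)))"

end

theory Submission
  imports Defs
begin


lemma final_ineq:
  fixes \<alpha> m l :: real
  assumes "0 < \<alpha>" "\<alpha> * exp 1 < m" "m < l"
  shows "(l/\<alpha>) powr (m/l - 1) * (1 + (1 - m/l) * (l/\<alpha>) / m * \<alpha>) \<le> 1"
proof -
  define s where "s = l/\<alpha>"
  define t where "t = m/\<alpha>"
  have et: "exp 1 < t" using assms unfolding t_def by (simp add: field_simps)
  have ts: "t < s" using assms unfolding t_def s_def by (simp add: divide_strict_right_mono)
  have t0: "0 < t" using et by (meson exp_gt_zero less_trans)
  have s0: "0 < s" using t0 ts by linarith
  have a: "m/l = t/s" using assms unfolding s_def t_def by (simp add: field_simps)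
  have "ln s / s \<le> ln t / t" using ln_x_over_x_mono[of t s] et ts by simp
  hence "t/s * ln s \<le> ln t" using s0 t0 by (simp add: field_simps)
  hence "s powr (t/s) \<le> t" using s0 t0 by (metis exp_le_cancel_iff exp_ln powr_def less_irrefl mult.commute)
  hence "s powr (t/s - 1) \<le> t/s" using s0 by (simp add: powr_diff divide_right_mono)
  moreover have "1 + (1 - m/l) * (l/\<alpha>) / m * \<alpha> = s/t" using assms t0
    unfolding s_def t_def by (simp add: field_simps)
  ultimately have "s powr (m/l - 1) * (1 + (1 - m/l) * (l/\<alpha>) / m * \<alpha>) \<le> t/s * (s/t)"
    using a s0 t0 by (metis mult_right_mono less_imp_le divide_pos_pos)
  also have "\<dots> = 1" using s0 t0 by simp
  finally show ?thesis unfolding s_def .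
qed

lemma ennreal_split3:
  fixes C F K G :: real
  assumes "0 \<le> C" "0 \<le> F" "0 \<le> K" "0 \<le> G"
  shows "ennreal (C * (F + K * G)) = ennreal C * (ennreal F + ennreal K * ennreal G)"
  using assms by (simp add: ennreal_mult ennreal_plus)

lemma young_pt:
  fixes w c a :: real
  assumes "0 \<le> w" "0 < c" "0 < a" "a < 1"
  shows "w powr a \<le> c powr (a - 1) * (a * w + (1 - a) * c)"
proof (cases "w = 0")
  case True thus ?thesis using assms by simp
next
  case False
  hence "w powr a * c powr (1 - a) \<le> a * w + (1 - a) * c"
    using Youngs_inequality_0[of a "1-a" w c] assms by simp
  hence "c powr (a - 1) * (w powr a * c powr (1 - a)) \<le> c powr (a - 1) * (a * w + (1 - a) * c)"
    by (simp add: mult_left_mono)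
  moreover have "c powr (a - 1) * (w powr a * c powr (1 - a)) = w powr a"
    using assms by (simp add: powr_add[symmetric] mult.left_commute)
  ultimately show ?thesis by simp
qed



theorem mainTheorem13:
  fixes \<Omega> :: "'a::euclidean_space set" and p :: "'a \<Rightarrow> real" and m l :: real
  assumes "open \<Omega>" and "connected \<Omega>" and "bounded \<Omega>" and "\<Omega> \<noteq> {}"
    and "C1_closure \<Omega> p"
    and "1 < (INF x\<in>\<Omega>. p x)" and "bdd_above (p ` \<Omega>)"
    and "(LINT x:\<Omega>|lebesgue. 1 / p x) * exp 1 < m" and "m < l"
  shows "\<forall>u \<in> var_Lp \<Omega> (\<lambda>x. l * p x).
           lux_norm \<Omega> (\<lambda>x. m * p x) u \<le> lux_norm \<Omega> (\<lambda>x. l * p x) u"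
proof
  fix u assume u: "u \<in> var_Lp \<Omega> (\<lambda>x. l * p x)"
  define N where "N = restrict_space lebesgue \<Omega>"
  have Osets: "\<Omega> \<in> sets lebesgue" using assms(1,3) lmeasurable_open fmeasurableD by blast
  have spN: "space N = \<Omega>" unfolding N_def by (simp add: space_restrict_space)
  have conv: "(\<integral>\<^sup>+x\<in>\<Omega>. h x \<partial>lebesgue) = (\<integral>\<^sup>+x. h x \<partial>N)" for h
    unfolding N_def using Osets by (subst nn_integral_restrict_space) auto
  have contp: "continuous_on \<Omega> p" using assms(5) unfolding C1_closure_def
    by (meson closure_subset continuous_on_subset)
  have "compact (closure \<Omega>)" using assms(3) by (simp add: compact_closure)
  hence "compact (p ` closure \<Omega>)" using assms(5) unfolding C1_closure_def
    using compact_continuous_image by blast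
  hence "bdd_below (p ` closure \<Omega>)" by (simp add: bounded_imp_bdd_below compact_imp_bounded)
  hence bddb: "bdd_below (p ` \<Omega>)" by (meson bdd_below_mono closure_subset image_mono)
  have p1: "1 < p x" if "x \<in> \<Omega>" for x
    using assms(6) cINF_lower[OF bddb that] by linarith
  have p0: "0 < p x" if "x \<in> \<Omega>" for x using p1[OF that] by linarith
  have umeas[measurable]: "u \<in> borel_measurable N"
    using u Osets unfolding var_Lp_def set_borel_measurable_def N_def
    by (subst borel_measurable_restrict_space_iff) auto
  have pmeas[measurable]: "p \<in> borel_measurable N"
    unfolding N_def using continuous_imp_measurable_on_sets_lebesgue[OF contp Osets] .
  define \<alpha> where "\<alpha> = (LINT x:\<Omega>|lebesgue. 1 / p x)"
  have intg: "integrable N (\<lambda>x. 1 / p x)"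
  proof (rule integrableI_bounded_set[where A=\<Omega> and B=1])
    show "\<Omega> \<in> sets N" using spN sets.top by metis
    show "emeasure N \<Omega> < \<infinity>" unfolding N_def using Osets assms(1,3)
      using emeasure_bounded_finite[OF assms(3)] by (simp add: emeasure_restrict_space)
    show "AE x in N. x \<in> \<Omega> \<longrightarrow> norm (1 / p x) \<le> 1"
      by (intro AE_I2 impI) (use p1 in \<open>fastforce dest: p1\<close>)
    show "AE x in N. x \<notin> \<Omega> \<longrightarrow> 1 / p x = 0" using spN by auto
  qed auto
  have alpha_int: "integral\<^sup>L N (\<lambda>x. 1 / p x) = \<alpha>"
    unfolding N_def \<alpha>_def set_lebesgue_integral_def using Osets
    by (subst integral_restrict_space) auto
  have nn1: "AE x in N. 0 \<le> 1 / p x"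
  proof (rule AE_I2)
    fix x assume "x \<in> space N"
    hence "0 < p x" using p0 spN by auto
    thus "0 \<le> 1 / p x" by simp
  qed
  have alpha_eq: "(\<integral>\<^sup>+x. ennreal (1 / p x) \<partial>N) = ennreal \<alpha>"
    using nn_integral_eq_integral[OF intg nn1] alpha_int by simp
  have a0: "0 \<le> \<alpha>"
    using integral_nonneg_AE[OF nn1] alpha_int by simp
  have m0: "0 < m" using a0 assms(8) unfolding \<alpha>_def[symmetric]
    by (smt (verit) exp_gt_zero mult_nonneg_nonneg)
  have l0: "0 < l" using m0 assms(9) by linarith
  define a where "a = m / l"
  have a01: "0 < a" "a < 1" using m0 l0 assms(9) unfolding a_def by auto
  define c where "c = (if \<alpha> > 0 then l / \<alpha> else 1)"
  have c0: "0 < c" unfolding c_def using l0 by auto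
  define k where "k = (1 - a) * c / m"
  have k0: "0 \<le> k" unfolding k_def using a01 c0 m0 by auto
  have key: "c powr (a - 1) * (1 + k * \<alpha>) \<le> 1"
  proof (cases "\<alpha> > 0")
    case True
    thus ?thesis using final_ineq[of \<alpha> m l] assms(8,9) unfolding c_def k_def a_def \<alpha>_def[symmetric]
      by simp
  next
    case False
    hence "\<alpha> = 0" using a0 by simp
    thus ?thesis unfolding c_def by simp
  qed
  define S where "S = (\<lambda>r. {\<gamma>::real. \<gamma> > 0 \<and>
      (\<integral>\<^sup>+ x\<in>\<Omega>. ennreal (\<bar>u x / \<gamma>\<bar> powr (r * p x) / (r * p x)) \<partial>lebesgue) \<le> 1})"
  have sub: "\<gamma> \<in> S m" if g: "\<gamma> \<in> S l" for \<gamma>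
  proof -
    have g0: "0 < \<gamma>" using g unfolding S_def by auto
    define f where "f = (\<lambda>x. \<bar>u x / \<gamma>\<bar> powr (l * p x) / (l * p x))"
    have fm[measurable]: "f \<in> borel_measurable N" unfolding f_def by measurable
    have f0: "0 \<le> f x" if "x \<in> \<Omega>" for x unfolding f_def using l0 p0[OF that] by simp
    have hl: "(\<integral>\<^sup>+x. ennreal (f x) \<partial>N) \<le> 1" using g unfolding S_def f_def conv by auto
    have pt: "\<bar>u x / \<gamma>\<bar> powr (m * p x) / (m * p x) \<le> c powr (a - 1) * (f x + k * (1 / p x))"
      if x: "x \<in> \<Omega>" for x
    proof -
      define w where "w = \<bar>u x / \<gamma>\<bar> powr (l * p x)"
      have w0: "0 \<le> w" unfolding w_def by simp
      have "w powr a = \<bar>u x / \<gamma>\<bar> powr (m * p x)"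
        unfolding w_def a_def powr_powr using l0 by (simp add: field_simps)
      hence "\<bar>u x / \<gamma>\<bar> powr (m * p x) \<le> c powr (a - 1) * (a * w + (1 - a) * c)"
        using young_pt[OF w0 c0 a01] by simp
      hence "\<bar>u x / \<gamma>\<bar> powr (m * p x) / (m * p x) \<le> c powr (a - 1) * (a * w + (1 - a) * c) / (m * p x)"
        using m0 p0[OF x] by (simp add: divide_right_mono)
      also have "\<dots> = c powr (a - 1) * (f x + k * (1 / p x))"
        unfolding f_def k_def a_def w_def using m0 l0 p0[OF x] by (simp add: field_simps)
      finally show ?thesis .
    qed
    have "(\<integral>\<^sup>+x. ennreal (\<bar>u x / \<gamma>\<bar> powr (m * p x) / (m * p x)) \<partial>N)
        \<le> (\<integral>\<^sup>+x. ennreal (c powr (a - 1)) * (ennreal (f x) + ennreal k * ennreal (1 / p x)) \<partial>N)"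
    proof (rule nn_integral_mono)
      fix x assume x: "x \<in> space N"
      hence "ennreal (\<bar>u x / \<gamma>\<bar> powr (m * p x) / (m * p x)) \<le> ennreal (c powr (a - 1) * (f x + k * (1 / p x)))"
        using pt spN by (auto intro: ennreal_leI)
      also have "\<dots> = ennreal (c powr (a - 1)) * (ennreal (f x) + ennreal k * ennreal (1 / p x))"
        using f0[of x] k0 p0[of x] x spN
        by (intro ennreal_split3) auto
      finally show "ennreal (\<bar>u x / \<gamma>\<bar> powr (m * p x) / (m * p x)) \<le> ennreal (c powr (a - 1)) * (ennreal (f x) + ennreal k * ennreal (1 / p x))" .
    qed
    also have "\<dots> = ennreal (c powr (a - 1)) * ((\<integral>\<^sup>+x. ennreal (f x) \<partial>N) + ennreal k * (\<integral>\<^sup>+x. ennreal (1 / p x) \<partial>N))"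
      using nn_integral_cmult[of "\<lambda>x. ennreal (f x) + ennreal k * ennreal (1 / p x)" N "ennreal (c powr (a - 1))"]
        nn_integral_add[of "\<lambda>x. ennreal (f x)" N "\<lambda>x. ennreal k * ennreal (1 / p x)"]
        nn_integral_cmult[of "\<lambda>x. ennreal (1 / p x)" N "ennreal k"]
      by simp
    also have "\<dots> \<le> ennreal (c powr (a - 1)) * (1 + ennreal k * ennreal \<alpha>)"
      using hl alpha_eq by (intro mult_left_mono add_mono) auto
    also have "\<dots> = ennreal (c powr (a - 1) * (1 + k * \<alpha>))"
      using ennreal_split3[of "c powr (a - 1)" 1 k \<alpha>] k0 a0 by simp
    also have "\<dots> \<le> 1" using key by (simp add: ennreal_le_1)
    finally show ?thesis using g0 unfolding S_def conv by auto
  qed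
  have ne: "S l \<noteq> {}"
  proof -
    define h where "h = (\<lambda>x. \<bar>u x\<bar> powr (l * p x))"
    have hm[measurable]: "h \<in> borel_measurable N" unfolding h_def by measurable
    have Kfin: "(\<integral>\<^sup>+x. ennreal (h x) \<partial>N) < \<infinity>"
      using u unfolding var_Lp_def h_def conv by auto
    define K where "K = enn2real (\<integral>\<^sup>+x. ennreal (h x) \<partial>N)"
    have K0: "0 \<le> K" unfolding K_def by simp
    have Keq: "(\<integral>\<^sup>+x. ennreal (h x) \<partial>N) = ennreal K"
      unfolding K_def using Kfin by (simp add: less_top[symmetric])
    define G where "G = max 1 (K / l)"
    define \<gamma> where "\<gamma> = G powr (1 / l)"
    have G1: "1 \<le> G" unfolding G_def by simp
    have g1: "1 \<le> \<gamma>" unfolding \<gamma>_def using G1 l0 by (simp add: ge_one_powr_ge_zero)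
    have gl: "\<gamma> powr l = G" unfolding \<gamma>_def powr_powr using l0 G1 by simp
    have pt: "\<bar>u x / \<gamma>\<bar> powr (l * p x) / (l * p x) \<le> (1 / (l * G)) * h x"
      if x: "x \<in> \<Omega>" for x
    proof -
      have q: "l \<le> l * p x" using l0 p1[OF x] by simp
      have B: "G \<le> \<gamma> powr (l * p x)" using powr_mono[OF q g1] gl by simp
      have "\<bar>u x / \<gamma>\<bar> powr (l * p x) / (l * p x) = h x / (\<gamma> powr (l * p x) * (l * p x))"
        unfolding h_def using g1 by (simp add: powr_divide abs_divide)
      also have "\<dots> \<le> h x / (G * l)"
      proof (rule divide_left_mono)
        show "G * l \<le> \<gamma> powr (l * p x) * (l * p x)" using B q G1 l0 by (intro mult_mono) auto
      qed (use G1 l0 g1 p0[OF x] in \<open>auto simp: h_def\<close>)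
      also have "\<dots> = (1 / (l * G)) * h x" by (simp add: field_simps)
      finally show ?thesis .
    qed
    have "(\<integral>\<^sup>+x. ennreal (\<bar>u x / \<gamma>\<bar> powr (l * p x) / (l * p x)) \<partial>N)
        \<le> (\<integral>\<^sup>+x. ennreal (1 / (l * G)) * ennreal (h x) \<partial>N)"
    proof (rule nn_integral_mono)
      fix x assume "x \<in> space N"
      hence "x \<in> \<Omega>" using spN by simp
      thus "ennreal (\<bar>u x / \<gamma>\<bar> powr (l * p x) / (l * p x)) \<le> ennreal (1 / (l * G)) * ennreal (h x)"
        using pt[of x] l0 G1 by (simp add: ennreal_mult[symmetric] h_def ennreal_leI)
    qed
    also have "\<dots> = ennreal (1 / (l * G)) * ennreal K"
      using nn_integral_cmult[of "\<lambda>x. ennreal (h x)" N "ennreal (1 / (l * G))"] Keq by simp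
    also have "\<dots> = ennreal (K / (l * G))" using K0 l0 G1 by (simp add: ennreal_mult[symmetric])
    also have "\<dots> \<le> 1"
    proof -
      have "K / l \<le> G" unfolding G_def by simp
      hence "K \<le> l * G" using l0 by (simp add: field_simps)
      hence "K / (l * G) \<le> 1" using l0 G1 by (simp add: field_simps)
      thus ?thesis by (simp add: ennreal_le_1)
    qed
    finally have "\<gamma> \<in> S l" unfolding S_def conv using g1 by auto
    thus ?thesis by auto
  qed
  have "lux_norm \<Omega> (\<lambda>x. m * p x) u = Inf (S m)" unfolding lux_norm_def S_def by simp
  also have "\<dots> \<le> Inf (S l)"
  proof (rule cInf_mono[OF ne])
    show "bdd_below (S m)" unfolding S_def by (rule bdd_belowI[of _ 0]) auto
    show "\<exists>a\<in>S m. a \<le> b" if "b \<in> S l" for b using sub[OF that] by auto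
  qed
  also have "Inf (S l) = lux_norm \<Omega> (\<lambda>x. l * p x) u" unfolding lux_norm_def S_def by simp
  finally show "lux_norm \<Omega> (\<lambda>x. m * p x) u \<le> lux_norm \<Omega> (\<lambda>x. l * p x) u" .
qed

end
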